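(* Let $C,D$ be cones together with a non-singular bilinear map $\langle\cdot,\cdot\rangle\colon C\times D\to\overline{\mathbb{R}}_+$, and equip $D$ with the weak upper topology $w(D,C)$. Then every sublinear functional $\psi\colon D\to\overline{\mathbb{R}}_+$ which is lower semicontinuous with respect to $w(D,C)$ is the pointwise supremum of the functionals $\widehat x$ lying below it: for every $y\in D$, \[\psi(y)=\sup\{\langle x,y\rangle\mid x\in C,\ \langle x,z\rangle\le\psi(z)\text{ for all }z\in D\}.\]
   Context: $\overline{\mathbb{R}}_+=[0,+\infty)\cup\{+\infty\}$ with extended arithmetic ($r+\infty=+\infty$, $r\cdot\infty=\infty$ for $r>0$, $0\cdot\infty=0$), equipped with the upper topology, whose open sets are $\emptyset$, $\overline{\mathbb{R}}_+$ and the intervals $]r,+\infty]$, $r\in[0,\infty)$; lower semicontinuous means continuous for this topology. A cone is a commutative monoid with a scalar multiplication by $[0,\infty)$ satisfying $r(x+y)=rx+ry$, $(r+s)x=rx+sx$, $(rs)x=r(sx)$, $1x=x$, $0x=0$. A functional $\psi\colon D\to\overline{\mathbb{R}}_+$ is sublinear if $\psi(ry)=r\psi(y)$ for all $r\in[0,\infty)$ and $\psi(y+z)\le\psi(y)+\psi(z)$. A bilinear map is one additive and homogeneous in each argument separately; it is non-singular if for $y\ne y'$ in $D$ there is $x\in C$ with $\langle x,y\rangle\ne\langle x,y'\rangle$. For $x\in C$, $\widehat x(y)=\langle x,y\rangle$. The weak upper topology $w(D,C)$ is the coarsest topology on $D$ making all $\widehat x$, $x\in C$, lower semicontinuous. The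 supremum of the empty set is $0$. *)

theory Defs
  imports "HOL-Analysis.Analysis"
begin

text \<open>Cones: a commutative monoid (add, zero) with a scalar multiplication by
  nonnegative reals (smul; only its values at r \<ge> 0 matter).\<close>
definition is_cone :: "('a \<Rightarrow> 'a \<Rightarrow> 'a) \<Rightarrow> 'a \<Rightarrow> (real \<Rightarrow> 'a \<Rightarrow> 'a) \<Rightarrow> bool" where
  "is_cone add zero smul \<longleftrightarrow>
     (\<forall>x y z. add (add x y) z = add x (add y z)) \<and>
     (\<forall>x y. add x y = add y x) \<and>
     (\<forall>x. add zero x = x) \<and>
     (\<forall>r x y. r \<ge> 0 \<longrightarrow> smul r (add x y) = add (smul r x) (smul r y)) \<and>
     (\<forall>r s x. r \<ge> 0 \<longrightarrow> s \<ge> 0 \<longrightarrow> smul (r + s) x = add (smul r x) (smul s x)) \<and>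
     (\<forall>r s x. r \<ge> 0 \<longrightarrow> s \<ge> 0 \<longrightarrow> smul (r * s) x = smul r (smul s x)) \<and>
     (\<forall>x. smul 1 x = x) \<and>
     (\<forall>x. smul 0 x = zero)"

definition is_bilinear ::
  "('c \<Rightarrow> 'c \<Rightarrow> 'c) \<Rightarrow> (real \<Rightarrow> 'c \<Rightarrow> 'c) \<Rightarrow> ('d \<Rightarrow> 'd \<Rightarrow> 'd) \<Rightarrow> (real \<Rightarrow> 'd \<Rightarrow> 'd)
   \<Rightarrow> ('c \<Rightarrow> 'd \<Rightarrow> ennreal) \<Rightarrow> bool" where
  "is_bilinear addC smultC addD smultD pair \<longleftrightarrow>
     (\<forall>x x' y. pair (addC x x') y = pair x y + pair x' y) \<and>
     (\<forall>r x y. r \<ge> 0 \<longrightarrow> pair (smultC r x) y = ennreal r * pair x y) \<and>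
     (\<forall>x y y'. pair x (addD y y') = pair x y + pair x y') \<and>
     (\<forall>r x y. r \<ge> 0 \<longrightarrow> pair x (smultD r y) = ennreal r * pair x y)"

definition non_singular :: "('c \<Rightarrow> 'd \<Rightarrow> ennreal) \<Rightarrow> bool" where
  "non_singular pair \<longleftrightarrow> (\<forall>y y'. y \<noteq> y' \<longrightarrow> (\<exists>x. pair x y \<noteq> pair x y'))"

definition upper_open :: "ennreal set \<Rightarrow> bool" where
  "upper_open U \<longleftrightarrow> U = {} \<or> U = UNIV \<or> (\<exists>r::real. r \<ge> 0 \<and> U = {ennreal r <..})"

text \<open>Lower semicontinuity = continuity into the upper topology.\<close>
definition lsc_upper :: "'a topology \<Rightarrow> ('a \<Rightarrow> ennreal) \<Rightarrow> bool" where
  "lsc_upper T f \<longleftrightarrow> (\<forall>U. upper_open U \<longrightarrow> openin T (f -` U \<inter> topspace T))"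

definition weak_upper_topology :: "('c \<Rightarrow> 'd \<Rightarrow> ennreal) \<Rightarrow> 'd topology" where
  "weak_upper_topology pair =
     topology_generated_by {(\<lambda>y. pair x y) -` U | x U. upper_open U}"

definition sublinear ::
  "('d \<Rightarrow> 'd \<Rightarrow> 'd) \<Rightarrow> (real \<Rightarrow> 'd \<Rightarrow> 'd) \<Rightarrow> ('d \<Rightarrow> ennreal) \<Rightarrow> bool" where
  "sublinear addD smultD \<psi> \<longleftrightarrow>
     (\<forall>r y. r \<ge> 0 \<longrightarrow> \<psi> (smultD r y) = ennreal r * \<psi> y) \<and>
     (\<forall>y z. \<psi> (addD y z) \<le> \<psi> y + \<psi> z)"

end

theory Submission
  imports Defs
begin


lemma two_fun_alt:
  fixes f g :: "'d \<Rightarrow> real"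
  assumes conv: "\<And>t z w. 0 \<le> t \<Longrightarrow> t \<le> 1 \<Longrightarrow> z\<in>K \<Longrightarrow> w\<in>K \<Longrightarrow> comb t z w \<in> K"
    and cf: "\<And>t z w. 0 \<le> t \<Longrightarrow> t \<le> 1 \<Longrightarrow> z\<in>K \<Longrightarrow> w\<in>K \<Longrightarrow> f (comb t z w) \<ge> t * f z + (1-t) * f w"
    and cg: "\<And>t z w. 0 \<le> t \<Longrightarrow> t \<le> 1 \<Longrightarrow> z\<in>K \<Longrightarrow> w\<in>K \<Longrightarrow> g (comb t z w) \<ge> t * g z + (1-t) * g w"
    and no: "\<forall>z\<in>K. \<not> (f z > 0 \<and> g z > 0)"
  shows "\<exists>\<mu>. 0 \<le> \<mu> \<and> \<mu> \<le> 1 \<and> (\<forall>z\<in>K. \<mu> * f z + (1-\<mu>) * g z \<le> 0)"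
proof -
  have key: "g w * f z \<le> (- g z) * (- f w)" if z: "z\<in>K" "f z > 0" and w: "w \<in> K" "g w > 0" for z w
  proof (rule ccontr)
    assume H: "\<not> ?thesis"
    define a where "a = f z"
    define b where "b = - g z"
    define c where "c = g w"
    define d where "d = - f w"
    have a: "a > 0" using z a_def by auto
    have b: "b \<ge> 0" using z no b_def by force
    have c: "c > 0" using w c_def by auto
    have d: "d \<ge> 0" using w no d_def by force
    have H': "c * a > b * d" using H a_def b_def c_def d_def by auto
    define S where "S = a + b + c + d"
    have S: "S > 0" using a b c d S_def by auto
    define t where "t = (c + d) / S"
    have t0: "0 \<le> t" using S c d t_def by auto
    have t1: "t \<le> 1" using S a b unfolding t_def S_def by (simp add: divide_le_eq_1)
    have om: "1 - t = (a + b) / S" using S unfolding t_def S_def by (simp add: field_simps)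
    have e1: "t * a + (1 - t) * (-d) = (c*a - b*d) / S"
      unfolding om unfolding t_def using S
      by (simp add: divide_simps) (simp add: algebra_simps)
    have e2: "t * (-b) + (1 - t) * c = (c*a - b*d) / S"
      unfolding om unfolding t_def using S
      by (simp add: divide_simps) (simp add: algebra_simps)
    have pos: "(c*a - b*d) / S > 0" using H' S by auto
    have "f (comb t z w) > 0"
      using cf[OF t0 t1 z(1) w(1)] e1 pos a_def d_def by auto
    moreover have "g (comb t z w) > 0"
      using cg[OF t0 t1 z(1) w(1)] e2 pos b_def c_def by auto
    moreover have "comb t z w \<in> K" using conv[OF t0 t1 z(1) w(1)] .
    ultimately show False using no by blast
  qed
  show ?thesis
  proof (cases "\<exists>w\<in>K. g w > 0")
    case False
    then show ?thesis by (intro exI[of _ 0]) (auto simp: not_less)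
  next
    case True
    then obtain w0 where w0: "w0 \<in> K" "g w0 > 0" by auto
    define L where "L = {g w / (g w - f w) | w. w\<in>K \<and> g w > 0}"
    have Lne: "L \<noteq> {}" using w0 L_def by auto
    have Lb: "l \<le> 1 \<and> 0 \<le> l" if lL: "l \<in> L" for l
    proof -
      obtain w where w: "w\<in>K" "g w > 0" "l = g w / (g w - f w)" using lL unfolding L_def by blast
      have "f w \<le> 0" using no w by force
      hence "g w - f w > 0" "g w \<le> g w - f w" using w by auto
      thus ?thesis using w by (auto simp: divide_le_eq_1)
    qed
    have bdd: "bdd_above L" using Lb by (auto simp: bdd_above_def)
    define \<mu> where "\<mu> = Sup L"
    have m1: "\<mu> \<le> 1" unfolding \<mu>_def using Lne Lb by (intro cSup_least) auto
    have m0: "0 \<le> \<mu>" unfolding \<mu>_def using Lne Lb bdd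
      by (meson all_not_in_conv cSup_upper2)
    have "\<forall>z\<in>K. \<mu> * f z + (1-\<mu>) * g z \<le> 0"
    proof
      fix z assume z: "z \<in> K"
      consider "g z > 0" | "f z > 0" | "f z \<le> 0 \<and> g z \<le> 0" by force
      then show "\<mu> * f z + (1-\<mu>) * g z \<le> 0"
      proof cases
        case 1
        have fz: "f z \<le> 0" using no z 1 by force
        have "g z / (g z - f z) \<in> L" using z 1 L_def by auto
        hence "g z / (g z - f z) \<le> \<mu>" unfolding \<mu>_def using bdd by (intro cSup_upper)
        hence "g z \<le> \<mu> * (g z - f z)" using 1 fz by (simp add: field_simps)
        then show ?thesis by (simp add: algebra_simps)
      next
        case 2
        have gz: "g z \<le> 0" using no z 2 by force
        have "\<mu> \<le> - g z / (f z - g z)" unfolding \<mu>_def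
        proof (rule cSup_least[OF Lne])
          fix l assume "l \<in> L"
          then obtain w where w: "w\<in>K" "g w > 0" "l = g w / (g w - f w)" unfolding L_def by blast
          have fw: "f w \<le> 0" using no w by force
          have k: "g w * f z \<le> (- g z) * (- f w)" using key[OF z 2 w(1) w(2)] .
          have "g w / (g w - f w) \<le> - g z / (f z - g z)"
            using w(2) fw 2 gz k by (simp add: divide_simps) (simp add: algebra_simps)
          thus "l \<le> - g z / (f z - g z)" using w by simp
        qed
        hence "\<mu> * (f z - g z) \<le> - g z" using 2 gz by (simp add: field_simps)
        then show ?thesis by (simp add: algebra_simps)
      next
        case 3
        have "\<mu> * f z \<le> 0" using m0 3 by (simp add: mult_nonneg_nonpos)
        moreover have "(1-\<mu>) * g z \<le> 0" using m1 3 by (simp add: mult_nonneg_nonpos)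
        ultimately show ?thesis by simp
      qed
    qed
    then show ?thesis using m0 m1 by blast
  qed
qed

lemma fan_lemma:
  fixes f :: "'i \<Rightarrow> 'd \<Rightarrow> real"
  assumes fin: "finite I" and ne: "I \<noteq> {}"
  shows "(\<And>t z w. 0 \<le> t \<Longrightarrow> t \<le> 1 \<Longrightarrow> z\<in>K \<Longrightarrow> w\<in>K \<Longrightarrow> comb t z w \<in> K) \<Longrightarrow>
    (\<And>i t z w. i \<in> I \<Longrightarrow> 0 \<le> t \<Longrightarrow> t \<le> 1 \<Longrightarrow> z\<in>K \<Longrightarrow> w\<in>K \<Longrightarrow> f i (comb t z w) \<ge> t * f i z + (1-t) * f i w) \<Longrightarrow>
    \<not> (\<exists>z\<in>K. \<forall>i\<in>I. f i z > 0) \<Longrightarrow>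
    \<exists>lam. (\<forall>i\<in>I. 0 \<le> lam i) \<and> (\<Sum>i\<in>I. lam i) = 1 \<and> (\<forall>z\<in>K. (\<Sum>i\<in>I. lam i * f i z) \<le> 0)"
  using fin ne
proof (induction I arbitrary: K rule: finite_ne_induct)
  case (singleton a)
  then show ?case by (intro exI[of _ "\<lambda>_. 1"]) (auto simp: not_less)
next
  case (insert a I)
  define Ka where "Ka = {z\<in>K. f a z > 0}"
  have convKa: "comb t z w \<in> Ka" if "0 \<le> t" "t \<le> 1" "z\<in>Ka" "w\<in>Ka" for t z w
  proof -
    have "f a (comb t z w) \<ge> t * f a z + (1-t) * f a w"
      using insert.prems(2)[of a t z w] that Ka_def by auto
    moreover have "t * f a z + (1-t) * f a w > 0"
    proof (cases "t = 0")
      case True then show ?thesis using that Ka_def by auto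
    next
      case False
      hence "t * f a z > 0" using that Ka_def by auto
      moreover have "(1-t) * f a w \<ge> 0" using that Ka_def by auto
      ultimately show ?thesis by linarith
    qed
    ultimately show ?thesis using that Ka_def insert.prems(1) by auto
  qed
  have "\<not> (\<exists>z\<in>Ka. \<forall>i\<in>I. f i z > 0)" using insert.prems(3) Ka_def by auto
  then obtain lam where l: "\<forall>i\<in>I. 0 \<le> lam i" "(\<Sum>i\<in>I. lam i) = 1" "\<forall>z\<in>Ka. (\<Sum>i\<in>I. lam i * f i z) \<le> 0"
    using insert.IH[of Ka] convKa insert.prems(2) Ka_def by auto
  define g where "g z = (\<Sum>i\<in>I. lam i * f i z)" for z
  have cg: "g (comb t z w) \<ge> t * g z + (1-t) * g w" if "0 \<le> t" "t \<le> 1" "z\<in>K" "w\<in>K" for t z w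
  proof -
    have "t * g z + (1-t) * g w = (\<Sum>i\<in>I. lam i * (t * f i z + (1-t) * f i w))"
      unfolding g_def by (simp add: sum_distrib_left sum.distrib[symmetric] algebra_simps)
    also have "\<dots> \<le> g (comb t z w)" unfolding g_def
      using insert.prems(2) that l(1) by (intro sum_mono mult_left_mono) auto
    finally show ?thesis .
  qed
  have no: "\<forall>z\<in>K. \<not> (f a z > 0 \<and> g z > 0)" using l(3) Ka_def g_def by force
  obtain \<mu> where m: "0 \<le> \<mu>" "\<mu> \<le> 1" "\<forall>z\<in>K. \<mu> * f a z + (1-\<mu>) * g z \<le> 0"
    using two_fun_alt[of K comb "f a" g] insert.prems(1,2) cg no by auto
  define lm' where "lm' i = (if i = a then \<mu> else (1-\<mu>) * lam i)" for i
  have s1: "(\<Sum>i\<in>I. lm' i) = (1-\<mu>) * (\<Sum>i\<in>I. lam i)"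
    using insert.hyps unfolding lm'_def by (auto simp: sum_distrib_left intro!: sum.cong split: if_splits)
  have s2: "(\<Sum>i\<in>I. lm' i * f i z) = (1-\<mu>) * g z" for z
    using insert.hyps unfolding lm'_def g_def by (auto simp: sum_distrib_left intro!: sum.cong split: if_splits)
  show ?case
  proof (intro exI[of _ lm'] conjI ballI)
    fix i assume "i \<in> insert a I" then show "0 \<le> lm' i" using m l(1) lm'_def by auto
  next
    show "(\<Sum>i\<in>insert a I. lm' i) = 1" using insert.hyps s1 l(2) lm'_def by simp
  next
    fix z assume "z \<in> K" then show "(\<Sum>i\<in>insert a I. lm' i * f i z) \<le> 0"
      using insert.hyps s2 m(3) lm'_def by simp
  qed
qed



lemma basis_lemma:
  assumes "generate_topology_on {(\<lambda>y. pair x y) -` U | x U. upper_open U} V" "y0 \<in> V"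
  shows "\<exists>I. finite I \<and> (\<forall>p\<in>I. snd p > 0 \<and> ennreal (snd p) < pair (fst p) y0) \<and>
     (\<forall>z. (\<forall>p\<in>I. ennreal (snd p) < pair (fst p) z) \<longrightarrow> z \<in> V)"
  using assms
proof (induction arbitrary: y0 rule: generate_topology_on.induct)
  case Empty
  then show ?case by simp
next
  case (Int a b)
  obtain I1 where I1: "finite I1" "\<forall>p\<in>I1. snd p > 0 \<and> ennreal (snd p) < pair (fst p) y0"
     "\<forall>z. (\<forall>p\<in>I1. ennreal (snd p) < pair (fst p) z) \<longrightarrow> z \<in> a"
    using Int.IH(1)[of y0] Int.prems by blast
  obtain I2 where I2: "finite I2" "\<forall>p\<in>I2. snd p > 0 \<and> ennreal (snd p) < pair (fst p) y0"
     "\<forall>z. (\<forall>p\<in>I2. ennreal (snd p) < pair (fst p) z) \<longrightarrow> z \<in> b"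
    using Int.IH(2)[of y0] Int.prems by blast
  show ?case using I1 I2 by (intro exI[of _ "I1 \<union> I2"]) auto
next
  case (UN K)
  then obtain k where k: "k \<in> K" "y0 \<in> k" by auto
  obtain I where I: "finite I" "\<forall>p\<in>I. snd p > 0 \<and> ennreal (snd p) < pair (fst p) y0"
     "\<forall>z. (\<forall>p\<in>I. ennreal (snd p) < pair (fst p) z) \<longrightarrow> z \<in> k"
    using UN.IH[OF k] by blast
  show ?case
  proof (intro exI[of _ I] conjI allI impI)
    fix z assume "\<forall>p\<in>I. ennreal (snd p) < pair (fst p) z"
    then show "z \<in> \<Union>K" using I(3) k(1) by blast
  qed (use I in auto)
next
  case (Basis s)
  then obtain x U where s: "s = (\<lambda>y. pair x y) -` U" "upper_open U" by auto
  consider "U = {}" | "U = UNIV" | r where "r \<ge> 0" "U = {ennreal r <..}"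
    using s(2) unfolding upper_open_def by auto
  then show ?case
  proof cases
    case 1 then show ?thesis using Basis s by auto
  next
    case 2 then show ?thesis using s by (intro exI[of _ "{}"]) auto
  next
    case 3
    have lt: "ennreal r < pair x y0" using Basis.prems s 3 by auto
    obtain r' where r': "r' > 0" "r \<le> r'" "ennreal r' < pair x y0"
    proof (cases "r > 0")
      case True then show ?thesis using that lt by auto
    next
      case False
      hence "0 < pair x y0" using lt 3 by auto
      then obtain q :: ennreal where q: "0 < q" "q < pair x y0" using dense by blast
      hence "q < top" using top.not_eq_extremum by fastforce
      hence qe: "q = ennreal (enn2real q)" by simp
      have "enn2real q > 0" using q \<open>q < top\<close> by (simp add: enn2real_positive_iff)
      then show ?thesis using that[of "enn2real q"] False 3 q qe by auto
    qed
    show ?thesis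
    proof (intro exI[of _ "{(x, r')}"] conjI allI impI)
      fix z assume "\<forall>p\<in>{(x, r')}. ennreal (snd p) < pair (fst p) z"
      hence "ennreal r' < pair x z" by simp
      hence "ennreal r < pair x z" using r'(2) by (meson ennreal_leI order.strict_trans1)
      then show "z \<in> s" using s 3 by auto
    qed (use r' in auto)
  qed
qed

lemma ennreal_approx:
  fixes a b :: ennreal
  assumes "\<And>r. 0 < r \<Longrightarrow> ennreal r < a \<Longrightarrow> ennreal r \<le> b"
  shows "a \<le> b"
proof (rule ccontr)
  assume "\<not> a \<le> b"
  hence "b < a" by simp
  then obtain c where c: "b < c" "c < a" using dense by blast
  hence "c < top" using top.not_eq_extremum by fastforce
  hence ce: "c = ennreal (enn2real c)" by simp
  have "0 < c" using c(1) order.strict_trans1[OF zero_le c(1)] by simp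
  hence "enn2real c > 0" using \<open>c < top\<close> by (simp add: enn2real_positive_iff)
  from assms[OF this] c ce show False by auto
qed



theorem theorem4p3:
  fixes addC :: "'c \<Rightarrow> 'c \<Rightarrow> 'c" and zeroC :: 'c and smultC :: "real \<Rightarrow> 'c \<Rightarrow> 'c"
    and addD :: "'d \<Rightarrow> 'd \<Rightarrow> 'd" and zeroD :: 'd and smultD :: "real \<Rightarrow> 'd \<Rightarrow> 'd"
    and pair :: "'c \<Rightarrow> 'd \<Rightarrow> ennreal" and \<psi> :: "'d \<Rightarrow> ennreal"
  assumes "is_cone addC zeroC smultC"
    and "is_cone addD zeroD smultD"
    and "is_bilinear addC smultC addD smultD pair"
    and "non_singular pair"
    and "sublinear addD smultD \<psi>"
    and "lsc_upper (weak_upper_topology pair) \<psi>"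
  shows "\<forall>y. \<psi> y = Sup {pair x y | x. \<forall>z. pair x z \<le> \<psi> z}"
proof
  fix y0
  have sC0: "\<And>x. smultC 0 x = zeroC" using assms(1) unfolding is_cone_def by blast
  have sD0: "\<And>x. smultD 0 x = zeroD" using assms(2) unfolding is_cone_def by blast
  have pAL: "\<And>x x' y. pair (addC x x') y = pair x y + pair x' y"
    using assms(3) unfolding is_bilinear_def by blast
  have pSL: "\<And>r x y. r \<ge> 0 \<Longrightarrow> pair (smultC r x) y = ennreal r * pair x y"
    using assms(3) unfolding is_bilinear_def by blast
  have pAR: "\<And>x y y'. pair x (addD y y') = pair x y + pair x y'"
    using assms(3) unfolding is_bilinear_def by blast
  have pSR: "\<And>r x y. r \<ge> 0 \<Longrightarrow> pair x (smultD r y) = ennreal r * pair x y"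
    using assms(3) unfolding is_bilinear_def by blast
  have psS: "\<And>r y. r \<ge> 0 \<Longrightarrow> \<psi> (smultD r y) = ennreal r * \<psi> y"
    using assms(5) unfolding sublinear_def by blast
  have psA: "\<And>y z. \<psi> (addD y z) \<le> \<psi> y + \<psi> z"
    using assms(5) unfolding sublinear_def by blast
  have ps0: "\<psi> zeroD = 0" using psS[of 0 zeroD] sD0 by simp
  have pC0: "pair zeroC z = 0" for z using pSL[of 0 zeroC z] sC0 by simp
  define S where "S = {pair x y0 | x. \<forall>z. pair x z \<le> \<psi> z}"
  have le1: "Sup S \<le> \<psi> y0" unfolding S_def by (rule Sup_least) auto
  have main: "\<exists>x. (\<forall>z. pair x z \<le> \<psi> z) \<and> ennreal r \<le> pair x y0"
    if r: "0 < r" "ennreal r < \<psi> y0" for r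
  proof -
    define \<S> where "\<S> = {(\<lambda>y. pair x y) -` U | x U. upper_open U}"
    define V where "V = \<psi> -` {ennreal r <..}"
    have "UNIV \<in> \<S>" unfolding \<S>_def upper_open_def by auto
    hence top: "topspace (weak_upper_topology pair) = UNIV"
      unfolding weak_upper_topology_def \<S>_def[symmetric] by auto
    have "upper_open {ennreal r <..}" unfolding upper_open_def using r(1) by (intro disjI2 exI[of _ r]) auto
    hence "openin (weak_upper_topology pair) V"
      using assms(6) top unfolding lsc_upper_def V_def by force
    hence "generate_topology_on \<S> V"
      unfolding weak_upper_topology_def \<S>_def by (rule openin_topology_generated_by)
    moreover have "y0 \<in> V" using r V_def by auto
    ultimately obtain I where I: "finite I" "\<forall>p\<in>I. snd p > 0 \<and> ennreal (snd p) < pair (fst p) y0"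
      "\<forall>z. (\<forall>p\<in>I. ennreal (snd p) < pair (fst p) z) \<longrightarrow> z \<in> V"
      using basis_lemma[of pair V y0] unfolding \<S>_def by blast
    define J where "J = {p\<in>I. \<forall>z. \<psi> z < top \<longrightarrow> pair (fst p) z < top}"
    have JI: "J \<subseteq> I" unfolding J_def by auto
    have finJ: "finite J" using I(1) JI finite_subset by blast
    have wex: "finite A \<Longrightarrow> A \<subseteq> I - J \<Longrightarrow> \<exists>w. \<psi> w < top \<and> (\<forall>p\<in>A. pair (fst p) w = top)" for A
    proof (induction A rule: finite_induct)
      case empty then show ?case using ps0 by (intro exI[of _ zeroD]) auto
    next
      case (insert p A)
      then obtain w where w: "\<psi> w < top" "\<forall>q\<in>A. pair (fst q) w = top" by auto
      have "p \<in> I - J" using insert by auto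
      then obtain v where v: "\<psi> v < top" "\<not> pair (fst p) v < top" unfolding J_def by auto
      have vt: "pair (fst p) v = top" using v(2) top.not_eq_extremum by blast
      have "\<psi> (addD w v) \<le> \<psi> w + \<psi> v" by (rule psA)
      also have "\<dots> < top" using w(1) v(1) by (simp add: ennreal_add_eq_top less_top)
      finally have "\<psi> (addD w v) < top" .
      moreover have "\<forall>q\<in>insert p A. pair (fst q) (addD w v) = top" using w(2) vt pAR by auto
      ultimately show ?case by blast
    qed
    obtain w where w: "\<psi> w < top" "\<forall>p\<in>I-J. pair (fst p) w = top" using wex[of "I-J"] I(1) by auto
    define K where "K = {z. \<psi> z < top}"
    define comb where "comb t z v = addD (smultD t z) (smultD (1-t) v)" for t z v
    define f where "f p z = r * enn2real (pair (fst p) z) / snd p - enn2real (\<psi> z)" for p z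
    have psle: "\<psi> (comb t z v) \<le> ennreal (t * enn2real (\<psi> z) + (1-t) * enn2real (\<psi> v))"
      if "0 \<le> t" "t \<le> 1" "z\<in>K" "v\<in>K" for t z v
    proof -
      have "\<psi> (comb t z v) \<le> \<psi> (smultD t z) + \<psi> (smultD (1-t) v)" unfolding comb_def by (rule psA)
      also have "\<dots> = ennreal t * ennreal (enn2real (\<psi> z)) + ennreal (1-t) * ennreal (enn2real (\<psi> v))"
        using that psS K_def by simp
      also have "\<dots> = ennreal (t * enn2real (\<psi> z) + (1-t) * enn2real (\<psi> v))"
        using that by (simp add: ennreal_mult)
      finally show ?thesis .
    qed
    have Kconv: "comb t z v \<in> K" if "0 \<le> t" "t \<le> 1" "z\<in>K" "v\<in>K" for t z v
      using psle[OF that] unfolding K_def by (simp add: le_less_trans)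
    have psle2: "enn2real (\<psi> (comb t z v)) \<le> t * enn2real (\<psi> z) + (1-t) * enn2real (\<psi> v)"
      if "0 \<le> t" "t \<le> 1" "z\<in>K" "v\<in>K" for t z v
    proof -
      have nn: "0 \<le> t * enn2real (\<psi> z) + (1-t) * enn2real (\<psi> v)" using that by simp
      have "enn2real (\<psi> (comb t z v)) \<le> enn2real (ennreal (t * enn2real (\<psi> z) + (1-t) * enn2real (\<psi> v)))"
        by (rule enn2real_mono[OF psle[OF that]]) simp
      thus ?thesis using enn2real_ennreal[OF nn] by linarith
    qed
    have paircomb: "enn2real (pair (fst p) (comb t z v)) = t * enn2real (pair (fst p) z) + (1-t) * enn2real (pair (fst p) v)"
      if "p \<in> J" "0 \<le> t" "t \<le> 1" "z\<in>K" "v\<in>K" for p t z v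
    proof -
      have fz: "pair (fst p) z < top" "pair (fst p) v < top" using that J_def K_def by auto
      have "pair (fst p) (comb t z v) = ennreal t * ennreal (enn2real (pair (fst p) z)) + ennreal (1-t) * ennreal (enn2real (pair (fst p) v))"
        unfolding comb_def using pAR pSR that fz by simp
      also have "\<dots> = ennreal (t * enn2real (pair (fst p) z) + (1-t) * enn2real (pair (fst p) v))"
        using that by (simp add: ennreal_mult)
      finally have eq: "pair (fst p) (comb t z v) = ennreal (t * enn2real (pair (fst p) z) + (1-t) * enn2real (pair (fst p) v))" .
      have nn: "0 \<le> t * enn2real (pair (fst p) z) + (1-t) * enn2real (pair (fst p) v)" using that by simp
      show ?thesis unfolding eq using enn2real_ennreal[OF nn] .
    qed
    have fconc: "f p (comb t z v) \<ge> t * f p z + (1-t) * f p v"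
      if "p \<in> J" "0 \<le> t" "t \<le> 1" "z\<in>K" "v\<in>K" for p t z v
    proof -
      have sp: "snd p > 0" using that JI I(2) by auto
      have e: "r * (t * enn2real (pair (fst p) z) + (1-t) * enn2real (pair (fst p) v)) / snd p
         = t * (r * enn2real (pair (fst p) z) / snd p) + (1-t) * (r * enn2real (pair (fst p) v) / snd p)"
        using sp by (simp add: field_simps)
      show ?thesis unfolding f_def paircomb[OF that] e using psle2[OF that(2-5)]
        by (simp add: algebra_simps)
    qed
    have noz: "\<not> (\<forall>p\<in>J. f p z > 0)" if z: "z \<in> K" for z
    proof
      assume H: "\<forall>p\<in>J. f p z > 0"
      define a where "a = enn2real (\<psi> z)"
      define b where "b = enn2real (\<psi> w)"
      have a0: "a \<ge> 0" "b \<ge> 0" using a_def b_def by auto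
      define M where "M = (\<lambda>p. enn2real (pair (fst p) z) / snd p) ` J \<union> {a/r + 1}"
      have Mfin: "finite M" "M \<noteq> {}" using finJ M_def by auto
      have Mgt: "\<forall>m\<in>M. m > a / r"
      proof
        fix m assume "m \<in> M"
        then consider "m = a/r + 1" | p where "p \<in> J" "m = enn2real (pair (fst p) z) / snd p"
          unfolding M_def by auto
        then show "m > a / r"
        proof cases
          case 1 then show ?thesis by simp
        next
          case 2
          have "f p z > 0" using H 2 by auto
          hence "r * (enn2real (pair (fst p) z) / snd p) > a" unfolding f_def a_def by simp
          then show ?thesis using 2 r(1) by (simp add: field_simps)
        qed
      qed
      define m where "m = Min M"
      have mM: "m \<in> M" using Mfin m_def by simp
      have mle: "\<forall>x\<in>M. m \<le> x" using Mfin m_def by simp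
      have mgt: "m > a / r" using Mgt mM by auto
      define s where "s = (a/r + m)/2"
      have s: "s > a / r" "s < m" using mgt s_def by auto
      have s0: "s > 0" using s(1) a0 r(1) by (smt (verit) divide_nonneg_pos)
      have rs: "r * s > a" using s(1) r(1) by (simp add: field_simps)
      define e where "e = (r * s - a) / (b + 1)"
      have e0: "e > 0" using rs a0 e_def by auto
      have eb: "a + e * b < r * s"
      proof -
        have "e * b \<le> e * (b + 1) - e" by (simp add: algebra_simps)
        also have "e * (b+1) = r * s - a" using e_def a0 by simp
        finally show ?thesis using e0 by linarith
      qed
      define z2 where "z2 = smultD (1/s) (addD z (smultD e w))"
      have "\<psi> z2 = ennreal (1/s) * \<psi> (addD z (smultD e w))" unfolding z2_def using psS s0 by simp
      also have "\<dots> \<le> ennreal (1/s) * (\<psi> z + \<psi> (smultD e w))" by (intro mult_left_mono psA) auto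
      also have "\<psi> z + \<psi> (smultD e w) = ennreal (a + e * b)"
        using psS[of e w] e0 z w(1) a0 unfolding a_def b_def K_def by (simp add: ennreal_mult)
      also have "ennreal (1/s) * ennreal (a + e * b) = ennreal ((a + e*b)/s)"
      proof -
        have "0 \<le> a + e * b" using a0 e0 by simp
        hence "ennreal (1/s * (a + e * b)) = ennreal (1/s) * ennreal (a + e*b)"
          using s0 by (intro ennreal_mult) auto
        thus ?thesis by simp
      qed
      finally have "\<psi> z2 \<le> ennreal ((a + e*b)/s)" .
      moreover have "(a + e*b)/s < r" using eb s0 by (simp add: field_simps)
      ultimately have "\<not> ennreal r < \<psi> z2" using s0 a0 e0
        by (metis ennreal_leI leD less_eq_real_def order_le_less_trans)
      hence "z2 \<notin> V" unfolding V_def by auto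
      moreover have "\<forall>p\<in>I. ennreal (snd p) < pair (fst p) z2"
      proof
        fix p assume pI: "p \<in> I"
        have pz2: "pair (fst p) z2 = ennreal (1/s) * (pair (fst p) z + ennreal e * pair (fst p) w)"
          unfolding z2_def using pAR pSR s0 e0 by simp
        show "ennreal (snd p) < pair (fst p) z2"
        proof (cases "p \<in> J")
          case True
          have fin: "pair (fst p) z < top" using True z J_def K_def by auto
          define ez where "ez = enn2real (pair (fst p) z)"
          have sp: "snd p > 0" using pI I(2) by auto
          have "ez / snd p \<in> M" unfolding M_def ez_def using True by auto
          hence "ez / snd p > s" using mle s by force
          hence "ez > s * snd p" using sp by (simp add: field_simps)
          hence lt: "snd p < ez / s" using s0 by (simp add: field_simps)
          have "ennreal (snd p) < ennreal (ez / s)" using lt sp by (simp add: ennreal_less_iff)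
          also have "ennreal (ez / s) = ennreal (1/s) * pair (fst p) z"
          proof -
            have "ennreal (1/s * ez) = ennreal (1/s) * ennreal ez"
              using s0 ez_def by (intro ennreal_mult) auto
            thus ?thesis using fin ez_def by simp
          qed
          also have "\<dots> \<le> pair (fst p) z2" unfolding pz2 by (intro mult_left_mono) auto
          finally show ?thesis .
        next
          case False
          hence "pair (fst p) w = top" using w(2) pI by auto
          hence "pair (fst p) z2 = top" unfolding pz2 using s0 e0 by simp
          then show ?thesis by simp
        qed
      qed
      ultimately show False using I(3) by blast
    qed
    have zK: "zeroD \<in> K" using ps0 K_def by simp
    have Jne: "J \<noteq> {}" using noz[OF zK] by auto
    obtain lam where lam: "\<forall>p\<in>J. 0 \<le> lam p" "(\<Sum>p\<in>J. lam p) = 1" "\<forall>z\<in>K. (\<Sum>p\<in>J. lam p * f p z) \<le> 0"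
    proof -
      have "\<not> (\<exists>z\<in>K. \<forall>i\<in>J. f i z > 0)"
      proof
        assume "\<exists>z\<in>K. \<forall>i\<in>J. f i z > 0"
        then obtain z where "z \<in> K" "\<forall>i\<in>J. f i z > 0" by blast
        with noz show False by blast
      qed
      hence "\<exists>lam. (\<forall>i\<in>J. 0 \<le> lam i) \<and> (\<Sum>i\<in>J. lam i) = 1 \<and> (\<forall>z\<in>K. (\<Sum>i\<in>J. lam i * f i z) \<le> 0)"
        apply (intro fan_lemma[OF finJ Jne, where comb=comb and K=K and f=f])
        subgoal by (rule Kconv)
        subgoal by (rule fconc)
        by assumption
      then show ?thesis by (elim exE conjE) (rule that)
    qed
    define c where "c p = lam p * r / snd p" for p
    have c0: "c p \<ge> 0" if pJ: "p \<in> J" for p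
    proof -
      have "snd p > 0" using JI I(2) pJ by auto
      moreover have "lam p \<ge> 0" using lam(1) pJ by auto
      ultimately show ?thesis using r(1) unfolding c_def by simp
    qed
    have xex: "finite A \<Longrightarrow> A \<subseteq> J \<Longrightarrow> \<exists>x. \<forall>z. pair x z = (\<Sum>p\<in>A. ennreal (c p) * pair (fst p) z)" for A
    proof (induction A rule: finite_induct)
      case empty then show ?case using pC0 by (intro exI[of _ zeroC]) auto
    next
      case (insert p A)
      have "A \<subseteq> J" "p \<in> J" using insert.prems by auto
      then obtain x where x: "\<forall>z. pair x z = (\<Sum>p\<in>A. ennreal (c p) * pair (fst p) z)"
        using insert.IH by blast
      have cp: "c p \<ge> 0" using c0 \<open>p \<in> J\<close> by blast
      show ?case
      proof (intro exI[of _ "addC (smultC (c p) (fst p)) x"] allI)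
        fix z
        show "pair (addC (smultC (c p) (fst p)) x) z = (\<Sum>p\<in>insert p A. ennreal (c p) * pair (fst p) z)"
          using x pAL pSL[OF cp] insert.hyps by simp
      qed
    qed
    obtain x where x: "\<forall>z. pair x z = (\<Sum>p\<in>J. ennreal (c p) * pair (fst p) z)" using xex finJ by blast
    have below: "pair x z \<le> \<psi> z" for z
    proof (cases "\<psi> z < top")
      case False then show ?thesis using top.not_eq_extremum by fastforce
    next
      case True
      hence zK: "z \<in> K" using K_def by simp
      define ez where "ez (p :: 'c \<times> real) = enn2real (pair (fst p) z)" for p
      have fin: "pair (fst p) z = ennreal (ez p)" if "p \<in> J" for p
        using that zK J_def K_def ez_def by auto
      have ezn: "ez p \<ge> 0" for p unfolding ez_def by simp
      have "pair x z = (\<Sum>p\<in>J. ennreal (c p * ez p))"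
        unfolding x[rule_format] using fin c0 ezn by (intro sum.cong refl) (simp add: ennreal_mult)
      also have "\<dots> = ennreal (\<Sum>p\<in>J. c p * ez p)" using c0 by (intro sum_ennreal) (simp add: ez_def)
      also have "(\<Sum>p\<in>J. c p * ez p) \<le> enn2real (\<psi> z)"
      proof -
        have "(\<Sum>p\<in>J. lam p * f p z) = (\<Sum>p\<in>J. c p * ez p) - (\<Sum>p\<in>J. lam p) * enn2real (\<psi> z)"
        proof -
          have "(\<Sum>p\<in>J. lam p * f p z) = (\<Sum>p\<in>J. c p * ez p - lam p * enn2real (\<psi> z))"
            by (rule sum.cong) (simp_all add: f_def c_def ez_def algebra_simps)
          also have "\<dots> = (\<Sum>p\<in>J. c p * ez p) - (\<Sum>p\<in>J. lam p * enn2real (\<psi> z))"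
            by (rule sum_subtractf)
          also have "(\<Sum>p\<in>J. lam p * enn2real (\<psi> z)) = (\<Sum>p\<in>J. lam p) * enn2real (\<psi> z)"
            by (rule sum_distrib_right[symmetric])
          finally show ?thesis .
        qed
        then show ?thesis using lam(2) lam(3) zK by auto
      qed
      hence "ennreal (\<Sum>p\<in>J. c p * ez p) \<le> \<psi> z" using True by (metis ennreal_enn2real ennreal_leI)
      finally show ?thesis .
    qed
    have "ennreal r = ennreal (\<Sum>p\<in>J. c p * snd p)"
    proof -
      have "(\<Sum>p\<in>J. c p * snd p) = (\<Sum>p\<in>J. lam p) * r"
        unfolding sum_distrib_right
      proof (rule sum.cong[OF refl])
        fix p assume "p \<in> J"
        hence "snd p > 0" using JI I(2) by auto
        thus "c p * snd p = lam p * r" unfolding c_def by simp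
      qed
      then show ?thesis using lam(2) by simp
    qed
    also have "\<dots> = (\<Sum>p\<in>J. ennreal (c p) * ennreal (snd p))"
    proof -
      have pos: "0 \<le> c p * snd p" "ennreal (c p * snd p) = ennreal (c p) * ennreal (snd p)" if "p \<in> J" for p
      proof -
        have "snd p > 0" "c p \<ge> 0" using JI I(2) that c0 by auto
        thus "0 \<le> c p * snd p" "ennreal (c p * snd p) = ennreal (c p) * ennreal (snd p)"
          by (auto intro: ennreal_mult)
      qed
      have "ennreal (\<Sum>p\<in>J. c p * snd p) = (\<Sum>p\<in>J. ennreal (c p * snd p))"
        using pos(1) by (intro sum_ennreal[symmetric]) auto
      also have "\<dots> = (\<Sum>p\<in>J. ennreal (c p) * ennreal (snd p))"
        using pos(2) by (intro sum.cong) auto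
      finally show ?thesis .
    qed
    also have "\<dots> \<le> (\<Sum>p\<in>J. ennreal (c p) * pair (fst p) y0)"
    proof (intro sum_mono mult_left_mono)
      fix p assume "p \<in> J"
      hence "ennreal (snd p) < pair (fst p) y0" using JI I(2) by blast
      thus "ennreal (snd p) \<le> pair (fst p) y0" by (rule less_imp_le)
    qed simp
    also have "\<dots> = pair x y0" using x by simp
    finally show ?thesis using below by blast
  qed
  have le2: "\<psi> y0 \<le> Sup S"
  proof (rule ennreal_approx)
    fix r :: real assume "0 < r" "ennreal r < \<psi> y0"
    then obtain x where "\<forall>z. pair x z \<le> \<psi> z" "ennreal r \<le> pair x y0" using main by blast
    hence "pair x y0 \<in> S" unfolding S_def by auto
    then show "ennreal r \<le> Sup S" using \<open>ennreal r \<le> pair x y0\<close> by (meson Sup_upper2)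
  qed
  show "\<psi> y0 = Sup {pair x y0 | x. \<forall>z. pair x z \<le> \<psi> z}" using le1 le2 S_def by auto
qed

end
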